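(* Let $G$ be an infinite, connected, locally finite graph, let $P$ be a metric ray of $G$ with ordered vertex set $\{u_0,u_1,u_2,\dots\}$, and let $S=\{x_1,\dots,x_n\}$ be a finite set of vertices of $G$. Then there exists an integer $i_0\ge 0$ such that for every $k\ge 0$, $$r(u_{i_0+k}\mid S)=r(u_{i_0}\mid S)+(k,k,\dots,k),$$ where $(k,\dots,k)$ has $n=|S|$ entries.
   Context: $d$ denotes shortest-path distance in $G$. For a finite ordered set $S=\{x_1,\dots,x_n\}$ of vertices, $r(u\mid S)=(d(u,x_1),\dots,d(u,x_n))$. A metric ray of $G$ with endpoint $u_0$ is an infinite subgraph $P$ whose vertices admit an ordering $u_0,u_1,u_2,\dots$ (all distinct) with $u_k$ adjacent to $u_{k+1}$ in $P$ for all $k\ge 0$ and $d_G(u_0,u_k)=k$ for all $k\ge0$. *)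

theory Defs
  imports Main
begin

text \<open>Simple graphs on the vertex type 'a, given by a symmetric irreflexive adjacency
relation E. The vertex set of the graph is UNIV :: 'a set.\<close>

definition sym_irrefl :: "('a \<Rightarrow> 'a \<Rightarrow> bool) \<Rightarrow> bool" where
  "sym_irrefl E \<longleftrightarrow> (\<forall>x y. E x y \<longrightarrow> E y x) \<and> (\<forall>x. \<not> E x x)"

definition walk :: "('a \<Rightarrow> 'a \<Rightarrow> bool) \<Rightarrow> 'a list \<Rightarrow> bool" where
  "walk E p \<longleftrightarrow> p \<noteq> [] \<and> (\<forall>i. Suc i < length p \<longrightarrow> E (p ! i) (p ! Suc i))"

definition connected_graph :: "('a \<Rightarrow> 'a \<Rightarrow> bool) \<Rightarrow> bool" where
  "connected_graph E \<longleftrightarrow> (\<forall>x y. \<exists>p. walk E p \<and> hd p = x \<and> last p = y)"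

definition locally_finite :: "('a \<Rightarrow> 'a \<Rightarrow> bool) \<Rightarrow> bool" where
  "locally_finite E \<longleftrightarrow> (\<forall>x. finite {y. E x y})"

definition gdist :: "('a \<Rightarrow> 'a \<Rightarrow> bool) \<Rightarrow> 'a \<Rightarrow> 'a \<Rightarrow> nat" where
  "gdist E x y = (LEAST n. \<exists>p. walk E p \<and> hd p = x \<and> last p = y \<and> length p = Suc n)"

definition metric_rep :: "('a \<Rightarrow> 'a \<Rightarrow> bool) \<Rightarrow> 'a \<Rightarrow> 'a list \<Rightarrow> nat list" where
  "metric_rep E u S = map (gdist E u) S"

definition metric_ray :: "('a \<Rightarrow> 'a \<Rightarrow> bool) \<Rightarrow> (nat \<Rightarrow> 'a) \<Rightarrow> bool" where
  "metric_ray E u \<longleftrightarrow> inj u \<and> (\<forall>k. E (u k) (u (Suc k))) \<and> (\<forall>k. gdist E (u 0) (u k) = k)"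

end

theory Submission
  imports Defs
begin

lemma walk_single: "walk E [a]" by (simp add: walk_def)

lemma walk_Cons: "p \<noteq> [] \<Longrightarrow> walk E (a # p) \<longleftrightarrow> E a (hd p) \<and> walk E p"
  unfolding walk_def
proof safe
  fix i assume "p \<noteq> []" "\<forall>i. Suc i < length (a # p) \<longrightarrow> E ((a # p) ! i) ((a # p) ! Suc i)"
  then show "E a (hd p)" by (metis hd_conv_nth length_Cons length_greater_0_conv nth_Cons_0 nth_Cons_Suc Suc_less_eq)
next
  fix i assume "\<forall>i. Suc i < length (a # p) \<longrightarrow> E ((a # p) ! i) ((a # p) ! Suc i)" "Suc i < length p"
  then show "E (p ! i) (p ! Suc i)" by (metis Suc_less_eq length_Cons nth_Cons_Suc)
next
  fix i assume "p \<noteq> []" "E a (hd p)" "\<forall>i. Suc i < length p \<longrightarrow> E (p ! i) (p ! Suc i)" "Suc i < length (a # p)"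
  then show "E ((a # p) ! i) ((a # p) ! Suc i)"
    by (cases i) (auto simp: hd_conv_nth)
qed

lemma walk_tl: "walk E (a # p) \<Longrightarrow> p \<noteq> [] \<Longrightarrow> walk E p"
  using walk_Cons by metis

lemma walk_append:
  "walk E p \<Longrightarrow> walk E q \<Longrightarrow> last p = hd q \<Longrightarrow> walk E (p @ tl q) \<and> length (p @ tl q) = length p + length q - 1"
proof (induction p)
  case Nil then show ?case by (simp add: walk_def)
next
  case (Cons a p)
  show ?case
  proof (cases "p = []")
    case True
    with Cons show ?thesis by (cases q) (auto simp: walk_def)
  next
    case False
    with Cons have wp: "walk E p" and e: "E a (hd p)" using walk_Cons by metis+
    from Cons.IH[OF wp Cons.prems(2)] Cons.prems(3) False
    have ih: "walk E (p @ tl q)" "length (p @ tl q) = length p + length q - 1" by auto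
    have "walk E (a # (p @ tl q))" using walk_Cons[of "p @ tl q" E a] ih False e by simp
    then show ?thesis using ih walk_def Cons.prems by (cases q) auto
  qed
qed

lemma walk_rev: "sym_irrefl E \<Longrightarrow> walk E p \<Longrightarrow> walk E (rev p)"
proof (induction p)
  case Nil then show ?case by (simp add: walk_def)
next
  case (Cons a p)
  show ?case
  proof (cases "p = []")
    case True then show ?thesis by (simp add: walk_def)
  next
    case False
    with Cons have wp: "walk E p" and e: "E a (hd p)" using walk_Cons by metis+
    have r: "walk E (rev p)" using Cons.IH[OF Cons.prems(1) wp] .
    have "walk E (rev p @ tl [hd p, a])"
      using walk_append[OF r, of "[hd p, a]"] Cons.prems(1) e False
      by (auto simp: walk_def sym_irrefl_def last_rev nth_Cons split: nat.splits)
    then show ?thesis by simp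
  qed
qed

lemma gdist_walk:
  assumes "connected_graph E"
  shows "\<exists>p. walk E p \<and> hd p = x \<and> last p = y \<and> length p = Suc (gdist E x y)"
proof -
  obtain p where p: "walk E p" "hd p = x" "last p = y" using assms connected_graph_def by metis
  then have "\<exists>n p. walk E p \<and> hd p = x \<and> last p = y \<and> length p = Suc n"
    by (metis Suc_pred length_greater_0_conv walk_def)
  then show ?thesis unfolding gdist_def by (rule LeastI_ex)
qed

lemma gdist_le: "walk E p \<Longrightarrow> hd p = x \<Longrightarrow> last p = y \<Longrightarrow> length p = Suc n \<Longrightarrow> gdist E x y \<le> n"
  unfolding gdist_def by (rule Least_le) blast

lemma gdist_tri:
  assumes "connected_graph E"
  shows "gdist E x z \<le> gdist E x y + gdist E y z"
proof -
  obtain p where p: "walk E p" "hd p = x" "last p = y" "length p = Suc (gdist E x y)"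
    using gdist_walk[OF assms] by blast
  obtain q where q: "walk E q" "hd q = y" "last q = z" "length q = Suc (gdist E y z)"
    using gdist_walk[OF assms] by blast
  have w: "walk E (p @ tl q)" "length (p @ tl q) = length p + length q - 1"
    using walk_append[OF p(1) q(1)] p q by auto
  have "p \<noteq> []" using p(1) walk_def by auto
  then have "hd (p @ tl q) = x" using p(2) by simp
  moreover have "last (p @ tl q) = z"
    using p q by (cases q; cases "tl q") (auto simp: walk_def)
  ultimately show ?thesis using gdist_le[OF w(1)] w(2) p(4) q(4) by simp
qed

lemma gdist_sym:
  assumes "sym_irrefl E" "connected_graph E"
  shows "gdist E x y \<le> gdist E y x"
proof -
  obtain p where p: "walk E p" "hd p = y" "last p = x" "length p = Suc (gdist E y x)"
    using gdist_walk[OF assms(2)] by blast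
  have "walk E (rev p)" using walk_rev[OF assms(1) p(1)] .
  moreover have "hd (rev p) = x" "last (rev p) = y" using p walk_def by (auto simp: hd_rev last_rev)
  ultimately show ?thesis using gdist_le p(4) by (metis length_rev)
qed

lemma gdist_adj: "E a b \<Longrightarrow> gdist E a b \<le> 1"
  by (rule gdist_le[of E "[a,b]"]) (auto simp: walk_def nth_Cons split: nat.splits)

lemma eventually_const:
  fixes h :: "nat \<Rightarrow> nat"
  assumes "\<And>k. h (Suc k) \<le> h k"
  shows "\<exists>N. \<forall>k\<ge>N. h k = h N"
proof -
  define m where "m = (LEAST v. v \<in> range h)"
  have "m \<in> range h" unfolding m_def by (rule LeastI_ex) blast
  then obtain N where N: "h N = m" by auto
  have mono: "h j \<le> h i" if "i \<le> j" for i j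
    using that by (induction j rule: dec_induct) (auto intro: order_trans[OF assms])
  have "\<forall>k\<ge>N. h k = h N"
  proof safe
    fix k assume "N \<le> k"
    then have "h k \<le> h N" by (rule mono)
    moreover have "m \<le> h k" unfolding m_def by (rule Least_le) blast
    ultimately show "h k = h N" using N by simp
  qed
  then show ?thesis by blast
qed

theorem lemma4:
  fixes E :: "'a \<Rightarrow> 'a \<Rightarrow> bool" and u :: "nat \<Rightarrow> 'a" and S :: "'a list"
  assumes "sym_irrefl E"
    and "infinite (UNIV :: 'a set)"
    and "connected_graph E"
    and "locally_finite E"
    and "metric_ray E u"
    and "distinct S"
  shows "\<exists>i0::nat. \<forall>k::nat.
           metric_rep E (u (i0 + k)) S = map (\<lambda>d. d + k) (metric_rep E (u i0) S)"
proof -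
  have ray: "\<And>k. E (u k) (u (Suc k))" "\<And>k. gdist E (u 0) (u k) = k"
    using assms(5) metric_ray_def by auto
  define h where "h x k = gdist E (u k) x + gdist E (u 0) x - k" for x k
  have lb: "k \<le> gdist E (u k) x + gdist E (u 0) x" for x k
  proof -
    have "k = gdist E (u 0) (u k)" using ray by simp
    also have "\<dots> \<le> gdist E (u 0) x + gdist E x (u k)" by (rule gdist_tri[OF assms(3)])
    also have "gdist E x (u k) \<le> gdist E (u k) x" by (rule gdist_sym[OF assms(1,3)])
    finally show ?thesis by simp
  qed
  have step: "gdist E (u (Suc k)) x \<le> gdist E (u k) x + 1" for x k
  proof -
    have "gdist E (u (Suc k)) x \<le> gdist E (u (Suc k)) (u k) + gdist E (u k) x"
      by (rule gdist_tri[OF assms(3)])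
    moreover have "E (u (Suc k)) (u k)" using ray assms(1) sym_irrefl_def by metis
    ultimately show ?thesis using gdist_adj by fastforce
  qed
  have "\<forall>x. \<exists>N. \<forall>k\<ge>N. h x k = h x N"
  proof
    fix x show "\<exists>N. \<forall>k\<ge>N. h x k = h x N"
    proof (rule eventually_const)
      fix k show "h x (Suc k) \<le> h x k"
        unfolding h_def using step[of k x] lb[of k x] lb[of "Suc k" x] by simp
    qed
  qed
  then obtain Nf where Nf: "\<And>x k. k \<ge> Nf x \<Longrightarrow> h x k = h x (Nf x)" by metis
  define N where "N = Max (Nf ` set S)"
  have eq: "gdist E (u (N + k)) x = gdist E (u N) x + k" if "x \<in> set S" for x k
  proof -
    have "Nf x \<le> N" unfolding N_def using that by simp
    then have "h x (N + k) = h x N" using Nf[of x "N+k"] Nf[of x N] by simp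
    then show ?thesis using lb[of "N+k" x] lb[of N x] unfolding h_def by simp
  qed
  show ?thesis
    by (rule exI[of _ N]) (auto simp: metric_rep_def eq)
qed

end
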